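(* Let $f\colon[0,1]\times\mathbb R\to\mathbb R$ be continuous, and let $A,B\colon[0,1]\to\mathbb R$ be of bounded variation with $\operatorname{var}_{[0,1]}A+\operatorname{var}_{[0,1]}(A-B)<1$. Then there exists $\lambda_0>0$ such that for every $\lambda\in\mathbb R$ with $|\lambda|\le\lambda_0$ the boundary value problem $x''(t)=-\lambda f(t,x(t))$, $t\in[0,1]$, $x(0)=\int_0^1x(s)\,dA(s)$, $x(1)=\int_0^1x(s)\,dB(s)$ has a solution.
   Context: $\operatorname{var}_{[0,1]}$ is the Jordan variation; integrals in the boundary conditions are Riemann–Stieltjes integrals; a solution is a twice continuously differentiable $x\colon[0,1]\to\mathbb R$ satisfying the equation and the boundary conditions. *)

theory Defs
  imports "HOL-Analysis.Analysis"
begin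

definition partitions :: "real \<Rightarrow> real \<Rightarrow> real list set" where
  "partitions a b = {ts. length ts \<ge> 2 \<and> hd ts = a \<and> last ts = b \<and> sorted ts}"

definition variation_sum :: "(real \<Rightarrow> real) \<Rightarrow> real list \<Rightarrow> real" where
  "variation_sum g ts = (\<Sum>i < length ts - 1. \<bar>g (ts ! Suc i) - g (ts ! i)\<bar>)"

definition bounded_variation_on :: "(real \<Rightarrow> real) \<Rightarrow> real \<Rightarrow> real \<Rightarrow> bool" where
  "bounded_variation_on g a b \<longleftrightarrow> bdd_above (variation_sum g ` partitions a b)"

definition total_variation :: "(real \<Rightarrow> real) \<Rightarrow> real \<Rightarrow> real \<Rightarrow> real" where
  "total_variation g a b = Sup (variation_sum g ` partitions a b)"

definition mesh :: "real list \<Rightarrow> real" where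
  "mesh ts = Max (insert 0 {ts ! Suc i - ts ! i | i. i < length ts - 1})"

definition RS_sum :: "(real \<Rightarrow> real) \<Rightarrow> (real \<Rightarrow> real) \<Rightarrow> real list \<Rightarrow> (nat \<Rightarrow> real) \<Rightarrow> real" where
  "RS_sum x g ts \<xi> = (\<Sum>i < length ts - 1. x (\<xi> i) * (g (ts ! Suc i) - g (ts ! i)))"

definition has_RS_integral :: "(real \<Rightarrow> real) \<Rightarrow> (real \<Rightarrow> real) \<Rightarrow> real \<Rightarrow> real \<Rightarrow> real \<Rightarrow> bool" where
  "has_RS_integral x g a b I \<longleftrightarrow>
     (\<forall>\<epsilon>>0. \<exists>\<delta>>0. \<forall>ts \<in> partitions a b. \<forall>\<xi>.
        mesh ts < \<delta> \<longrightarrow> (\<forall>i < length ts - 1. ts ! i \<le> \<xi> i \<and> \<xi> i \<le> ts ! Suc i) \<longrightarrow>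
        \<bar>RS_sum x g ts \<xi> - I\<bar> < \<epsilon>)"

end

theory Submission
  imports Defs "HOL-Complex_Analysis.Great_Picard"
begin


lemma vs_append:
  assumes "ts \<noteq> []"
  shows "variation_sum g (ts @ [z]) = variation_sum g ts + \<bar>g z - g (last ts)\<bar>"
proof -
  obtain m where m: "length ts = Suc m" using assms by (cases ts) auto
  have "variation_sum g (ts @ [z]) = (\<Sum>i < Suc m. \<bar>g ((ts@[z]) ! Suc i) - g ((ts@[z]) ! i)\<bar>)"
    unfolding variation_sum_def using m by simp
  also have "\<dots> = (\<Sum>i < m. \<bar>g ((ts@[z]) ! Suc i) - g ((ts@[z]) ! i)\<bar>) + \<bar>g z - g (ts ! m)\<bar>"
    using m by (simp add: nth_append)
  also have "(\<Sum>i < m. \<bar>g ((ts@[z]) ! Suc i) - g ((ts@[z]) ! i)\<bar>) = variation_sum g ts"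
    unfolding variation_sum_def using m by (auto simp: nth_append intro!: sum.cong)
  also have "ts ! m = last ts" using m assms by (simp add: last_conv_nth)
  finally show ?thesis .
qed

lemma partitions_nth:
  assumes "ts \<in> partitions a b" "i < length ts"
  shows "a \<le> ts ! i" "ts ! i \<le> b"
proof -
  have s: "sorted ts" and h: "hd ts = a" and l: "last ts = b" and len: "length ts \<ge> 2"
    using assms(1) unfolding partitions_def by auto
  have ne: "ts \<noteq> []" using len by auto
  have "ts ! 0 \<le> ts ! i" using s assms(2) by (simp add: sorted_nth_mono)
  then show "a \<le> ts ! i" using h ne by (simp add: hd_conv_nth)
  have "ts ! i \<le> ts ! (length ts - 1)" using s assms(2) by (simp add: sorted_nth_mono)
  then show "ts ! i \<le> b" using l ne by (simp add: last_conv_nth)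
qed

lemma partitions_step:
  assumes "ts \<in> partitions a b" "i < length ts - 1"
  shows "ts ! i \<le> ts ! Suc i"
  using assms unfolding partitions_def by (auto simp: sorted_nth_mono)

lemma mesh_ge:
  assumes "i < length ts - 1"
  shows "ts ! Suc i - ts ! i \<le> mesh ts"
proof -
  have fin: "finite {ts ! Suc i - ts ! i | i. i < length ts - 1}"
    by simp
  show ?thesis unfolding mesh_def
    using assms fin by (intro Max_ge) auto
qed

lemma uniform_partition:
  assumes "d > 0"
  shows "\<exists>ts \<in> partitions 0 1. mesh ts < d"
proof -
  obtain n :: nat where n: "real n > 1 / d" using reals_Archimedean2 by blast
  have npos: "n > 0" using n assms
    by (metis divide_pos_pos gr0I less_numeral_extra(1) of_nat_0 order_less_asym)
  define ts where "ts = map (\<lambda>k. real k / real n) [0..<Suc n]"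
  have len: "length ts = Suc n" by (simp add: ts_def)
  have nth: "ts ! k = real k / real n" if "k < Suc n" for k
    using that by (simp add: ts_def nth_map_upt del: upt_Suc)
  have "ts \<in> partitions 0 1"
  proof -
    have "sorted ts" unfolding sorted_iff_nth_mono using nth len
      by (auto intro!: divide_right_mono)
    moreover have "hd ts = 0" using len nth[of 0] by (cases ts) auto
    moreover have "last ts = 1" using len nth[of n] npos by (cases ts rule: rev_cases) auto
    ultimately show ?thesis using len npos unfolding partitions_def by auto
  qed
  moreover have "mesh ts \<le> 1 / real n"
  proof -
    have "\<forall>x \<in> insert 0 {ts ! Suc i - ts ! i | i. i < length ts - 1}. x \<le> 1 / real n"
    proof
      fix x assume "x \<in> insert 0 {ts ! Suc i - ts ! i | i. i < length ts - 1}"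
      then consider "x = 0" | i where "i < n" "x = ts ! Suc i - ts ! i" using len by auto
      then show "x \<le> 1 / real n"
      proof cases
        case 1 then show ?thesis by simp
      next
        case 2
        then have "x = (real (Suc i) - real i) / real n"
          using nth[of i] nth[of "Suc i"] by (simp add: diff_divide_distrib[symmetric])
        then show ?thesis by simp
      qed
    qed
    then show ?thesis unfolding mesh_def by (subst Max_le_iff) auto
  qed
  moreover have "1 / real n < d" using n assms npos
    by (metis divide_less_eq mult.commute of_nat_0_less_iff)
  ultimately show ?thesis by force
qed

lemma RS_unique:
  assumes "has_RS_integral x g 0 1 I" "has_RS_integral x g 0 1 J"
  shows "I = J"
proof (rule ccontr)
  assume ne: "I \<noteq> J"
  define e where "e = \<bar>I - J\<bar> / 2"
  have e: "e > 0" using ne by (simp add: e_def)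
  obtain d1 where d1: "d1 > 0" "\<forall>ts \<in> partitions 0 1. \<forall>\<xi>. mesh ts < d1 \<longrightarrow>
      (\<forall>i < length ts - 1. ts ! i \<le> \<xi> i \<and> \<xi> i \<le> ts ! Suc i) \<longrightarrow> \<bar>RS_sum x g ts \<xi> - I\<bar> < e"
    using assms(1) e unfolding has_RS_integral_def by blast
  obtain d2 where d2: "d2 > 0" "\<forall>ts \<in> partitions 0 1. \<forall>\<xi>. mesh ts < d2 \<longrightarrow>
      (\<forall>i < length ts - 1. ts ! i \<le> \<xi> i \<and> \<xi> i \<le> ts ! Suc i) \<longrightarrow> \<bar>RS_sum x g ts \<xi> - J\<bar> < e"
    using assms(2) e unfolding has_RS_integral_def by blast
  obtain ts where ts: "ts \<in> partitions 0 1" "mesh ts < min d1 d2"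
    using uniform_partition[of "min d1 d2"] d1 d2 by auto
  have tag: "\<forall>i < length ts - 1. ts ! i \<le> ts ! i \<and> ts ! i \<le> ts ! Suc i"
    using partitions_step[OF ts(1)] by auto
  have "\<bar>RS_sum x g ts ((!) ts) - I\<bar> < e" "\<bar>RS_sum x g ts ((!) ts) - J\<bar> < e"
    using d1(2) d2(2) ts tag by auto
  then obtain S where "\<bar>S - I\<bar> < e" "\<bar>S - J\<bar> < e" by blast
  then show False using e_def by (auto simp: abs_if split: if_split_asm)
qed

lemma bv_bdd:
  assumes "bounded_variation_on g 0 1" "ts \<in> partitions 0 1"
  shows "variation_sum g ts \<le> total_variation g 0 1"
  using assms unfolding bounded_variation_on_def total_variation_def
  by (intro cSup_upper) auto

lemma RS_sum_bound:
  assumes "ts \<in> partitions 0 1" "\<forall>i < length ts - 1. ts ! i \<le> \<xi> i \<and> \<xi> i \<le> ts ! Suc i"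
    and "\<And>t. t \<in> {0..1} \<Longrightarrow> \<bar>x t\<bar> \<le> M"
  shows "\<bar>RS_sum x g ts \<xi>\<bar> \<le> M * variation_sum g ts"
proof -
  have "\<bar>RS_sum x g ts \<xi>\<bar> \<le> (\<Sum>i < length ts - 1. \<bar>x (\<xi> i) * (g (ts ! Suc i) - g (ts ! i))\<bar>)"
    unfolding RS_sum_def by (rule sum_abs)
  also have "\<dots> \<le> (\<Sum>i < length ts - 1. M * \<bar>g (ts ! Suc i) - g (ts ! i)\<bar>)"
  proof (rule sum_mono)
    fix i assume i: "i \<in> {..< length ts - 1}"
    have "0 \<le> ts ! i" "ts ! Suc i \<le> 1" using partitions_nth[OF assms(1)] i by auto
    then have "\<xi> i \<in> {0..1}" using assms(2) i by force
    then have "\<bar>x (\<xi> i)\<bar> \<le> M" by (rule assms(3))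
    then show "\<bar>x (\<xi> i) * (g (ts ! Suc i) - g (ts ! i))\<bar> \<le> M * \<bar>g (ts ! Suc i) - g (ts ! i)\<bar>"
      by (simp add: abs_mult mult_right_mono)
  qed
  also have "\<dots> = M * variation_sum g ts" unfolding variation_sum_def by (simp add: sum_distrib_left)
  finally show ?thesis .
qed

lemma RS_bound:
  assumes "has_RS_integral x g 0 1 I" "bounded_variation_on g 0 1"
    and "\<And>t. t \<in> {0..1} \<Longrightarrow> \<bar>x t\<bar> \<le> M" "M \<ge> 0"
  shows "\<bar>I\<bar> \<le> M * total_variation g 0 1"
proof (rule field_le_epsilon)
  fix e :: real assume e: "e > 0"
  obtain d where d: "d > 0" "\<forall>ts \<in> partitions 0 1. \<forall>\<xi>. mesh ts < d \<longrightarrow>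
      (\<forall>i < length ts - 1. ts ! i \<le> \<xi> i \<and> \<xi> i \<le> ts ! Suc i) \<longrightarrow> \<bar>RS_sum x g ts \<xi> - I\<bar> < e"
    using assms(1) e unfolding has_RS_integral_def by blast
  obtain ts where ts: "ts \<in> partitions 0 1" "mesh ts < d"
    using uniform_partition[of d] d by auto
  have tag: "\<forall>i < length ts - 1. ts ! i \<le> ts ! i \<and> ts ! i \<le> ts ! Suc i"
    using partitions_step[OF ts(1)] by auto
  have 1: "\<bar>RS_sum x g ts ((!) ts) - I\<bar> < e" using d ts tag by auto
  have 2: "\<bar>RS_sum x g ts ((!) ts)\<bar> \<le> M * variation_sum g ts"
    using RS_sum_bound[OF ts(1) tag assms(3)] by auto
  have 3: "M * variation_sum g ts \<le> M * total_variation g 0 1"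
    using bv_bdd[OF assms(2) ts(1)] assms(4) by (simp add: mult_left_mono)
  show "\<bar>I\<bar> \<le> M * total_variation g 0 1 + e" using 1 2 3 by linarith
qed

lemma RS_combine:
  assumes "has_RS_integral x g 0 1 I" "has_RS_integral y h 0 1 J"
    and eq: "\<And>ts \<xi>. RS_sum z k ts \<xi> = RS_sum x g ts \<xi> - RS_sum y h ts \<xi>"
  shows "has_RS_integral z k 0 1 (I - J)"
  unfolding has_RS_integral_def
proof (intro allI impI)
  fix e :: real assume e: "e > 0"
  have e2: "e/2 > 0" using e by simp
  obtain d1 where d1: "d1 > 0" "\<forall>ts \<in> partitions 0 1. \<forall>\<xi>. mesh ts < d1 \<longrightarrow>
      (\<forall>i < length ts - 1. ts ! i \<le> \<xi> i \<and> \<xi> i \<le> ts ! Suc i) \<longrightarrow> \<bar>RS_sum x g ts \<xi> - I\<bar> < e/2"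
    using assms(1) e2 unfolding has_RS_integral_def by blast
  obtain d2 where d2: "d2 > 0" "\<forall>ts \<in> partitions 0 1. \<forall>\<xi>. mesh ts < d2 \<longrightarrow>
      (\<forall>i < length ts - 1. ts ! i \<le> \<xi> i \<and> \<xi> i \<le> ts ! Suc i) \<longrightarrow> \<bar>RS_sum y h ts \<xi> - J\<bar> < e/2"
    using assms(2) e2 unfolding has_RS_integral_def by blast
  show "\<exists>d>0. \<forall>ts\<in>partitions 0 1. \<forall>\<xi>. mesh ts < d \<longrightarrow>
        (\<forall>i<length ts - 1. ts ! i \<le> \<xi> i \<and> \<xi> i \<le> ts ! Suc i) \<longrightarrow>
        \<bar>RS_sum z k ts \<xi> - (I - J)\<bar> < e"
  proof (intro exI[of _ "min d1 d2"] conjI ballI allI impI)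
    show "min d1 d2 > 0" using d1 d2 by simp
    fix ts \<xi> assume a: "ts \<in> partitions 0 1" "mesh ts < min d1 d2"
      "\<forall>i<length ts - 1. ts ! i \<le> \<xi> i \<and> \<xi> i \<le> ts ! Suc i"
    have m1: "mesh ts < d1" "mesh ts < d2" using a(2) by auto
    from d1(2) a(1) m1(1) a(3) have "\<bar>RS_sum x g ts \<xi> - I\<bar> < e/2" by blast
    moreover from d2(2) a(1) m1(2) a(3) have "\<bar>RS_sum y h ts \<xi> - J\<bar> < e/2" by blast
    ultimately show "\<bar>RS_sum z k ts \<xi> - (I - J)\<bar> < e" unfolding eq by linarith
  qed
qed

lemma RS_diff_integrand:
  assumes "has_RS_integral x g 0 1 I" "has_RS_integral y g 0 1 J"
  shows "has_RS_integral (\<lambda>t. x t - y t) g 0 1 (I - J)"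
  by (rule RS_combine[OF assms]) (simp add: RS_sum_def sum_subtractf[symmetric] left_diff_distrib)

lemma RS_diff_integrator:
  assumes "has_RS_integral x g 0 1 I" "has_RS_integral x h 0 1 J"
  shows "has_RS_integral x (\<lambda>t. g t - h t) 0 1 (I - J)"
  by (rule RS_combine[OF assms]) (simp add: RS_sum_def sum_subtractf[symmetric] algebra_simps)



lemma partitions_append:
  assumes "ts \<in> partitions a b" "b \<le> c"
  shows "ts @ [c] \<in> partitions a c"
proof -
  have ne: "ts \<noteq> []" using assms(1) unfolding partitions_def by auto
  have "\<forall>x \<in> set ts. x \<le> c"
    using partitions_nth(2)[OF assms(1)] assms(2) by (auto simp: in_set_conv_nth) (meson order_trans)
  then show ?thesis using assms(1) ne unfolding partitions_def by (auto simp: sorted_append)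
qed

lemma partitions_two: "a \<le> b \<Longrightarrow> [a, b] \<in> partitions a b"
  unfolding partitions_def by auto

lemma var_nonneg:
  assumes "bounded_variation_on g 0 1"
  shows "0 \<le> total_variation g 0 1"
proof -
  have "variation_sum g [0,1] \<le> total_variation g 0 1"
    by (rule bv_bdd[OF assms partitions_two]) simp
  moreover have "0 \<le> variation_sum g [0,1]" unfolding variation_sum_def by simp
  ultimately show ?thesis by linarith
qed

lemma bv_diff:
  assumes "bounded_variation_on A 0 1" "bounded_variation_on B 0 1"
  shows "bounded_variation_on (\<lambda>s. A s - B s) 0 1"
proof -
  have "variation_sum (\<lambda>s. A s - B s) ts \<le> total_variation A 0 1 + total_variation B 0 1"
    if "ts \<in> partitions 0 1" for ts
  proof -
    have "variation_sum (\<lambda>s. A s - B s) ts \<le> variation_sum A ts + variation_sum B ts"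
      unfolding variation_sum_def sum.distrib[symmetric]
      by (rule sum_mono) linarith
    then show ?thesis using bv_bdd[OF assms(1) that] bv_bdd[OF assms(2) that] by linarith
  qed
  then show ?thesis unfolding bounded_variation_on_def bdd_above_def by blast
qed

lemma var_super:
  assumes bv: "bounded_variation_on A 0 1" and ts: "0 \<le> t" "t \<le> s" "s \<le> 1"
  shows "total_variation A 0 t + \<bar>A s - A t\<bar> \<le> total_variation A 0 s"
proof -
  have bdd: "bdd_above (variation_sum A ` partitions 0 s)"
    unfolding bdd_above_def
  proof (intro exI ballI)
    fix v assume "v \<in> variation_sum A ` partitions 0 s"
    then obtain ps where ps: "ps \<in> partitions 0 s" "v = variation_sum A ps" by auto
    have ne: "ps \<noteq> []" using ps(1) unfolding partitions_def by auto
    have "ps @ [1] \<in> partitions 0 1" by (rule partitions_append[OF ps(1) ts(3)])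
    then have "variation_sum A (ps @ [1]) \<le> total_variation A 0 1" by (rule bv_bdd[OF bv])
    then show "v \<le> total_variation A 0 1" using vs_append[OF ne, of A 1] ps(2) by simp
  qed
  have "Sup (variation_sum A ` partitions 0 t) \<le> total_variation A 0 s - \<bar>A s - A t\<bar>"
  proof (rule cSup_least)
    show "variation_sum A ` partitions 0 t \<noteq> {}" using partitions_two[OF ts(1)] by blast
    fix v assume "v \<in> variation_sum A ` partitions 0 t"
    then obtain ps where ps: "ps \<in> partitions 0 t" "v = variation_sum A ps" by auto
    have ne: "ps \<noteq> []" and l: "last ps = t" using ps(1) unfolding partitions_def by auto
    have "ps @ [s] \<in> partitions 0 s" by (rule partitions_append[OF ps(1) ts(2)])
    then have "variation_sum A (ps @ [s]) \<le> total_variation A 0 s"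
      unfolding total_variation_def by (rule cSup_upper[OF imageI bdd])
    then show "v \<le> total_variation A 0 s - \<bar>A s - A t\<bar>" using vs_append[OF ne, of A s] ps(2) l by simp
  qed
  then show ?thesis unfolding total_variation_def by simp
qed

lemma bv_decomp:
  assumes "bounded_variation_on A 0 1"
  shows "mono_on {0..1} (\<lambda>t. total_variation A 0 t)"
    and "mono_on {0..1} (\<lambda>t. total_variation A 0 t - A t)"
proof -
  have key: "total_variation A 0 t + \<bar>A s - A t\<bar> \<le> total_variation A 0 s"
    if "t \<in> {0..1}" "s \<in> {0..1}" "t \<le> s" for t s :: real
    using var_super[OF assms, of t s] that by auto
  show "mono_on {0..1} (\<lambda>t. total_variation A 0 t)"
  proof (rule mono_onI)
    fix t s :: real assume "t \<in> {0..1}" "s \<in> {0..1}" "t \<le> s"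
    then show "total_variation A 0 t \<le> total_variation A 0 s"
      using key abs_ge_zero[of "A s - A t"] by fastforce
  qed
  show "mono_on {0..1} (\<lambda>t. total_variation A 0 t - A t)"
  proof (rule mono_onI)
    fix t s :: real assume "t \<in> {0..1}" "s \<in> {0..1}" "t \<le> s"
    then have "total_variation A 0 t + \<bar>A s - A t\<bar> \<le> total_variation A 0 s" by (rule key)
    moreover have "A s - A t \<le> \<bar>A s - A t\<bar>" by (rule abs_ge_self)
    ultimately show "total_variation A 0 t - A t \<le> total_variation A 0 s - A s" by linarith
  qed
qed



lemma interval_piece_bound:
  fixes g y y' :: "real \<Rightarrow> real"
  assumes g: "mono_on {0..1} g"
    and y: "\<And>t. t \<in> {0..1} \<Longrightarrow> (y has_real_derivative y' t) (at t within {0..1})"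
    and c: "continuous_on {0..1} y'"
    and M: "\<And>t. t \<in> {0..1} \<Longrightarrow> \<bar>y' t\<bar> \<le> M"
    and gi: "(\<lambda>s. g s * y' s) integrable_on {0..1}"
    and uv: "0 \<le> u" "u \<le> \<xi>" "\<xi> \<le> v" "v \<le> 1"
  shows "\<bar>y v * g v - y u * g u - integral {u..v} (\<lambda>s. g s * y' s) - y \<xi> * (g v - g u)\<bar>
          \<le> M * (v - u) * (g v - g u)"
proof -
  let ?h = "\<lambda>s. g s * y' s"
  have ftc: "(y' has_integral (y q - y p)) {p..q}" if "0 \<le> p" "p \<le> q" "q \<le> 1" for p q
  proof (rule fundamental_theorem_of_calculus[OF that(2)])
    fix x assume "x \<in> {p..q}"
    then have "x \<in> {0..1}" using that by auto
    then show "(y has_vector_derivative y' x) (at x within {p..q})"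
      using y[of x] that by (auto simp: has_real_derivative_iff_has_vector_derivative
          intro: has_vector_derivative_within_subset)
  qed
  have hint: "?h integrable_on {p..q}" if "0 \<le> p" "q \<le> 1" for p q
    by (rule integrable_on_subinterval[OF gi]) (use that in auto)
  have yint: "y' integrable_on {p..q}" if "0 \<le> p" "q \<le> 1" for p q
    by (rule integrable_on_subinterval[OF integrable_continuous_interval[OF c]]) (use that in auto)
  have split: "integral {u..v} ?h = integral {u..\<xi>} ?h + integral {\<xi>..v} ?h"
    using Henstock_Kurzweil_Integration.integral_combine[OF uv(2,3) hint] uv by simp
  have gmono: "g p \<le> g q" if "0 \<le> p" "p \<le> q" "q \<le> 1" for p q
    using g that by (auto intro: mono_onD)
  have p1: "((\<lambda>s. (g v - g s) * y' s) has_integral (g v * (y v - y \<xi>) - integral {\<xi>..v} ?h)) {\<xi>..v}"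
  proof -
    have "((\<lambda>s. g v * y' s) has_integral (g v * (y v - y \<xi>))) {\<xi>..v}"
      using has_integral_mult_right[OF ftc[of \<xi> v]] uv by simp
    moreover have "(?h has_integral integral {\<xi>..v} ?h) {\<xi>..v}"
      using hint[of \<xi> v] uv by (simp add: integrable_integral)
    ultimately have "((\<lambda>s. g v * y' s - g s * y' s) has_integral (g v * (y v - y \<xi>) - integral {\<xi>..v} ?h)) {\<xi>..v}"
      by (rule has_integral_diff)
    then show ?thesis by (simp add: left_diff_distrib)
  qed
  have p2: "((\<lambda>s. (g u - g s) * y' s) has_integral (g u * (y \<xi> - y u) - integral {u..\<xi>} ?h)) {u..\<xi>}"
  proof -
    have "((\<lambda>s. g u * y' s) has_integral (g u * (y \<xi> - y u))) {u..\<xi>}"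
      using has_integral_mult_right[OF ftc[of u \<xi>]] uv by simp
    moreover have "(?h has_integral integral {u..\<xi>} ?h) {u..\<xi>}"
      using hint[of u \<xi>] uv by (simp add: integrable_integral)
    ultimately have "((\<lambda>s. g u * y' s - g s * y' s) has_integral (g u * (y \<xi> - y u) - integral {u..\<xi>} ?h)) {u..\<xi>}"
      by (rule has_integral_diff)
    then show ?thesis by (simp add: left_diff_distrib)
  qed
  have b1: "norm (g v * (y v - y \<xi>) - integral {\<xi>..v} ?h) \<le> (M * (g v - g u)) * measure lborel {\<xi>..v}"
  proof (rule has_integral_bound_real[OF _ finite.emptyI p1])
    show "0 \<le> M * (g v - g u)" using M[of 0] gmono[of u v] uv by (auto intro: mult_nonneg_nonneg)
    fix s assume "s \<in> {\<xi>..v} - {}"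
    then have s: "\<xi> \<le> s" "s \<le> v" by auto
    have "0 \<le> g v - g s" "g v - g s \<le> g v - g u" using gmono[of s v] gmono[of u s] s uv by auto
    moreover have "\<bar>y' s\<bar> \<le> M" using M[of s] s uv by auto
    ultimately have "\<bar>g v - g s\<bar> * \<bar>y' s\<bar> \<le> (g v - g u) * M"
      by (intro mult_mono) auto
    then show "norm ((g v - g s) * y' s) \<le> M * (g v - g u)"
      by (simp add: abs_mult mult.commute)
  qed
  have b2: "norm (g u * (y \<xi> - y u) - integral {u..\<xi>} ?h) \<le> (M * (g v - g u)) * measure lborel {u..\<xi>}"
  proof (rule has_integral_bound_real[OF _ finite.emptyI p2])
    show "0 \<le> M * (g v - g u)" using M[of 0] gmono[of u v] uv by (auto intro: mult_nonneg_nonneg)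
    fix s assume "s \<in> {u..\<xi>} - {}"
    then have s: "u \<le> s" "s \<le> \<xi>" by auto
    have "\<bar>g u - g s\<bar> \<le> g v - g u" using gmono[of s v] gmono[of u s] s uv by auto
    moreover have "\<bar>y' s\<bar> \<le> M" using M[of s] s uv by auto
    ultimately have "\<bar>g u - g s\<bar> * \<bar>y' s\<bar> \<le> (g v - g u) * M"
      by (intro mult_mono) auto
    then show "norm ((g u - g s) * y' s) \<le> M * (g v - g u)"
      by (simp add: abs_mult mult.commute)
  qed
  have eq: "y v * g v - y u * g u - integral {u..v} ?h - y \<xi> * (g v - g u)
      = (g v * (y v - y \<xi>) - integral {\<xi>..v} ?h) + (g u * (y \<xi> - y u) - integral {u..\<xi>} ?h)"
    unfolding split by (simp add: algebra_simps)
  have "measure lborel {\<xi>..v} = v - \<xi>" "measure lborel {u..\<xi>} = \<xi> - u" using uv by auto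
  then have "\<bar>y v * g v - y u * g u - integral {u..v} ?h - y \<xi> * (g v - g u)\<bar>
      \<le> M * (g v - g u) * (v - \<xi>) + M * (g v - g u) * (\<xi> - u)"
    unfolding eq using b1 b2 abs_triangle_ineq[of "g v * (y v - y \<xi>) - integral {\<xi>..v} ?h"
        "g u * (y \<xi> - y u) - integral {u..\<xi>} ?h"] by (simp only: real_norm_def; linarith)
  also have "\<dots> = M * (v - u) * (g v - g u)" by (simp add: algebra_simps)
  finally show ?thesis .
qed


lemma partitions_hd_last:
  assumes "ts \<in> partitions a b"
  shows "ts ! 0 = a" "ts ! (length ts - 1) = b"
proof -
  have ne: "ts \<noteq> []" using assms unfolding partitions_def by auto
  show "ts ! 0 = a" using assms ne unfolding partitions_def by (simp add: hd_conv_nth)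
  show "ts ! (length ts - 1) = b" using assms ne unfolding partitions_def by (simp add: last_conv_nth)
qed

lemma RS_exists_mono_aux:
  fixes g y y' :: "real \<Rightarrow> real"
  assumes g: "mono_on {0..1} g"
    and y: "\<And>t. t \<in> {0..1} \<Longrightarrow> (y has_real_derivative y' t) (at t within {0..1})"
    and c: "continuous_on {0..1} y'"
    and gi: "(\<lambda>s. g s * y' s) integrable_on {0..1}"
  shows "has_RS_integral y g 0 1 (y 1 * g 1 - y 0 * g 0 - integral {0..1} (\<lambda>s. g s * y' s))"
  unfolding has_RS_integral_def
proof (intro allI impI)
  fix e :: real assume e: "e > 0"
  let ?h = "\<lambda>s. g s * y' s"
  let ?I = "y 1 * g 1 - y 0 * g 0 - integral {0..1} ?h"
  obtain M where M: "M > 0" "\<And>t. t \<in> {0..1} \<Longrightarrow> \<bar>y' t\<bar> \<le> M"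
    using compact_continuous_image[OF c compact_Icc] unfolding compact_eq_bounded_closed bounded_pos
    by (auto simp: real_norm_def)
  define \<Delta> where "\<Delta> = g 1 - g 0"
  have \<Delta>: "\<Delta> \<ge> 0" unfolding \<Delta>_def using g by (auto intro: mono_onD)
  define G where "G t = integral {0..t} ?h" for t
  have comb: "integral {u..v} ?h = G v - G u" if "0 \<le> u" "u \<le> v" "v \<le> 1" for u v
  proof -
    have "?h integrable_on {0..v}" by (rule integrable_on_subinterval[OF gi]) (use that in auto)
    from Henstock_Kurzweil_Integration.integral_combine[OF that(1,2) this] show ?thesis
      unfolding G_def by simp
  qed
  define d where "d = e / (M * \<Delta> + 1)"
  have dpos: "d > 0" unfolding d_def using e M \<Delta> by (auto intro!: divide_pos_pos add_nonneg_pos)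
  show "\<exists>d>0. \<forall>ts\<in>partitions 0 1. \<forall>\<xi>. mesh ts < d \<longrightarrow>
        (\<forall>i<length ts - 1. ts ! i \<le> \<xi> i \<and> \<xi> i \<le> ts ! Suc i) \<longrightarrow>
        \<bar>RS_sum y g ts \<xi> - ?I\<bar> < e"
  proof (intro exI[of _ d] conjI ballI allI impI dpos)
    fix ts \<xi> assume ts: "ts \<in> partitions 0 1" and me: "mesh ts < d"
      and tag: "\<forall>i<length ts - 1. ts ! i \<le> \<xi> i \<and> \<xi> i \<le> ts ! Suc i"
    define n where "n = length ts - 1"
    have T0: "ts ! 0 = 0" and Tn: "ts ! n = 1" using partitions_hd_last[OF ts] n_def by auto
    have Tin: "0 \<le> ts ! i" "ts ! Suc i \<le> 1" "ts ! i \<le> ts ! Suc i" if "i < n" for i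
      using partitions_nth[OF ts, of i] partitions_nth[OF ts, of "Suc i"] partitions_step[OF ts, of i]
        that n_def by auto
    define D where "D i = y (ts ! Suc i) * g (ts ! Suc i) - y (ts ! i) * g (ts ! i)
       - integral {ts ! i..ts ! Suc i} ?h - y (\<xi> i) * (g (ts ! Suc i) - g (ts ! i))" for i
    have tel1: "(\<Sum>i<n. y (ts ! Suc i) * g (ts ! Suc i) - y (ts ! i) * g (ts ! i)) = y 1 * g 1 - y 0 * g 0"
      using sum_lessThan_telescope[of "\<lambda>i. y (ts ! i) * g (ts ! i)" n] by (simp only: T0 Tn)
    then have tel1': "(\<Sum>i<n. y (ts ! Suc i) * g (ts ! Suc i)) - (\<Sum>i<n. y (ts ! i) * g (ts ! i)) = y 1 * g 1 - y 0 * g 0"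
      by (simp only: sum_subtractf)
    have "(\<Sum>i<n. integral {ts ! i..ts ! Suc i} ?h) = (\<Sum>i<n. G (ts ! Suc i) - G (ts ! i))"
      by (rule sum.cong) (auto simp: comb Tin)
    also have "\<dots> = G 1 - G 0"
      using sum_lessThan_telescope[of "\<lambda>i. G (ts ! i)" n] T0 Tn by simp
    also have "\<dots> = integral {0..1} ?h" unfolding G_def by simp
    finally have tel2: "(\<Sum>i<n. integral {ts ! i..ts ! Suc i} ?h) = integral {0..1} ?h" .
    have "?I - RS_sum y g ts \<xi> = (\<Sum>i<n. D i)"
      unfolding D_def RS_sum_def n_def[symmetric] sum_subtractf using tel1' tel2 by linarith
    then have "\<bar>RS_sum y g ts \<xi> - ?I\<bar> = \<bar>\<Sum>i<n. D i\<bar>" by linarith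
    also have "\<dots> \<le> (\<Sum>i<n. \<bar>D i\<bar>)" by (rule sum_abs)
    also have "\<dots> \<le> (\<Sum>i<n. M * mesh ts * (g (ts ! Suc i) - g (ts ! i)))"
    proof (rule sum_mono)
      fix i assume i: "i \<in> {..<n}"
      then have i': "i < n" by simp
      have "\<bar>D i\<bar> \<le> M * (ts ! Suc i - ts ! i) * (g (ts ! Suc i) - g (ts ! i))"
        unfolding D_def
        by (rule interval_piece_bound[OF g y c M(2) gi]) (use Tin[OF i'] tag i' n_def in auto)
      also have "\<dots> \<le> M * mesh ts * (g (ts ! Suc i) - g (ts ! i))"
      proof (intro mult_right_mono mult_left_mono)
        show "ts ! Suc i - ts ! i \<le> mesh ts" using mesh_ge i' n_def by simp
        show "0 \<le> M" using M by simp
        show "0 \<le> g (ts ! Suc i) - g (ts ! i)" using g Tin[OF i'] by (auto intro: mono_onD)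
      qed
      finally show "\<bar>D i\<bar> \<le> M * mesh ts * (g (ts ! Suc i) - g (ts ! i))" .
    qed
    also have "\<dots> = M * mesh ts * \<Delta>"
      unfolding sum_distrib_left[symmetric] \<Delta>_def
      using sum_lessThan_telescope[of "\<lambda>i. g (ts ! i)" n] T0 Tn by simp
    also have "\<dots> \<le> M * d * \<Delta>"
      using me M \<Delta> by (intro mult_right_mono mult_left_mono) auto
    also have "\<dots> < e"
    proof -
      have "M * d * \<Delta> = e * (M * \<Delta>) / (M * \<Delta> + 1)" unfolding d_def by simp
      also have "\<dots> < e"
      proof -
        have p: "0 \<le> M * \<Delta>" using M \<Delta> by simp
        then have "e * (M * \<Delta>) < e * (M * \<Delta> + 1)" using e by simp
        then show ?thesis using p by (simp add: divide_less_eq)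
      qed
      finally show ?thesis .
    qed
    finally show "\<bar>RS_sum y g ts \<xi> - ?I\<bar> < e" .
  qed
qed


lemma mono_prod_integrable:
  fixes g y' :: "real \<Rightarrow> real"
  assumes g: "mono_on {0..1} g" and c: "continuous_on {0..1} y'"
  shows "(\<lambda>s. g s * y' s) integrable_on {0..1}"
proof -
  have m: "g \<in> borel_measurable (lebesgue_on {0..1})"
    by (rule borel_measurable_integrable[OF integrable_mono_on[OF g]])
  have "g ` {0..1} \<subseteq> {g 0..g 1}" by (auto intro!: mono_onD[OF g])
  then have b: "bounded (g ` {0..1})" by (rule bounded_subset[OF bounded_closed_interval])
  have "(\<lambda>s. g s * y' s) absolutely_integrable_on {0..1}"
    by (rule absolutely_integrable_bounded_measurable_product_real[OF m _ b
          absolutely_integrable_continuous_real[OF c]]) simp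
  then show ?thesis unfolding absolutely_integrable_on_def by blast
qed

lemma RS_exists_mono:
  fixes g y y' :: "real \<Rightarrow> real"
  assumes g: "mono_on {0..1} g"
    and y: "\<And>t. t \<in> {0..1} \<Longrightarrow> (y has_real_derivative y' t) (at t within {0..1})"
    and c: "continuous_on {0..1} y'"
  shows "\<exists>I. has_RS_integral y g 0 1 I"
  using RS_exists_mono_aux[OF g y c mono_prod_integrable[OF g c]] by blast

lemma RS_exists:
  fixes y y' :: "real \<Rightarrow> real"
  assumes bv: "bounded_variation_on A 0 1"
    and y: "\<And>t. t \<in> {0..1} \<Longrightarrow> (y has_real_derivative y' t) (at t within {0..1})"
    and c: "continuous_on {0..1} y'"
  shows "\<exists>I. has_RS_integral y A 0 1 I"
proof -
  obtain I1 where I1: "has_RS_integral y (\<lambda>t. total_variation A 0 t) 0 1 I1"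
    using RS_exists_mono[OF bv_decomp(1)[OF bv] y c] by blast
  obtain I2 where I2: "has_RS_integral y (\<lambda>t. total_variation A 0 t - A t) 0 1 I2"
    using RS_exists_mono[OF bv_decomp(2)[OF bv] y c] by blast
  have "has_RS_integral y (\<lambda>t. total_variation A 0 t - (total_variation A 0 t - A t)) 0 1 (I1 - I2)"
    by (rule RS_diff_integrator[OF I1 I2])
  then show ?thesis by auto
qed

definition RSI :: "(real \<Rightarrow> real) \<Rightarrow> (real \<Rightarrow> real) \<Rightarrow> real" where
  "RSI y g = (THE I. has_RS_integral y g 0 1 I)"

lemma RSI_eq: "has_RS_integral y g 0 1 I \<Longrightarrow> RSI y g = I"
  unfolding RSI_def by (rule the_equality) (auto intro: RS_unique)

lemma RSI_has:
  assumes "bounded_variation_on A 0 1"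
    and "\<And>t. t \<in> {0..1} \<Longrightarrow> (y has_real_derivative y' t) (at t within {0..1})"
    and "continuous_on {0..1} y'"
  shows "has_RS_integral y A 0 1 (RSI y A)"
  using RS_exists[OF assms] RSI_eq by metis



definition Qf :: "(real \<Rightarrow> real) \<Rightarrow> real \<Rightarrow> real" where
  "Qf g t = integral {0..t} g"
definition Pf :: "(real \<Rightarrow> real) \<Rightarrow> real \<Rightarrow> real" where
  "Pf g t = integral {0..t} (Qf g)"

lemma Q_deriv:
  assumes "continuous_on {0..1} g" "t \<in> {0..1}"
  shows "(Qf g has_real_derivative g t) (at t within {0..1})"
  unfolding Qf_def[abs_def] by (rule integral_has_real_derivative[OF assms])

lemma Q_cont:
  assumes "continuous_on {0..1} g"
  shows "continuous_on {0..1} (Qf g)"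
  by (rule DERIV_continuous_on[OF Q_deriv[OF assms]])

lemma P_deriv:
  assumes "continuous_on {0..1} g" "t \<in> {0..1}"
  shows "(Pf g has_real_derivative Qf g t) (at t within {0..1})"
  unfolding Pf_def[abs_def] by (rule integral_has_real_derivative[OF Q_cont[OF assms(1)] assms(2)])

lemma P_cont:
  assumes "continuous_on {0..1} g"
  shows "continuous_on {0..1} (Pf g)"
  by (rule DERIV_continuous_on[OF P_deriv[OF assms]])

lemma int_bound01:
  fixes f :: "real \<Rightarrow> real"
  assumes "f integrable_on {0..t}" "t \<in> {0..1}" "\<And>s. s \<in> {0..1} \<Longrightarrow> \<bar>f s\<bar> \<le> M" "M \<ge> 0"
  shows "\<bar>integral {0..t} f\<bar> \<le> M"
proof -
  have "norm (integral {0..t} f) \<le> M * measure lborel {0..t}"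
    by (rule has_integral_bound_real[OF assms(4) finite.emptyI integrable_integral[OF assms(1)]])
       (use assms(2,3) in auto)
  also have "\<dots> \<le> M" using assms(2,4) by (simp add: mult_left_le)
  finally show ?thesis by simp
qed

lemma Q_bound:
  assumes "continuous_on {0..1} g" "t \<in> {0..1}" "\<And>s. s \<in> {0..1} \<Longrightarrow> \<bar>g s\<bar> \<le> M" "M \<ge> 0"
  shows "\<bar>Qf g t\<bar> \<le> M"
  unfolding Qf_def
  by (rule int_bound01[OF integrable_on_subinterval[OF integrable_continuous_interval[OF assms(1)]] assms(2-4)])
     (use assms(2) in auto)

lemma P_bound:
  assumes "continuous_on {0..1} g" "t \<in> {0..1}" "\<And>s. s \<in> {0..1} \<Longrightarrow> \<bar>g s\<bar> \<le> M" "M \<ge> 0"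
  shows "\<bar>Pf g t\<bar> \<le> M"
  unfolding Pf_def
  by (rule int_bound01[OF integrable_on_subinterval[OF integrable_continuous_interval[OF Q_cont[OF assms(1)]]] assms(2)])
     (use assms Q_bound in auto)

lemma Q_diff:
  assumes "continuous_on {0..1} g1" "continuous_on {0..1} g2" "t \<in> {0..1}"
  shows "Qf g1 t - Qf g2 t = Qf (\<lambda>s. g1 s - g2 s) t"
  unfolding Qf_def
  by (rule integral_diff[symmetric];
      rule integrable_on_subinterval[OF integrable_continuous_interval]) (use assms in auto)

lemma P_diff:
  assumes "continuous_on {0..1} g1" "continuous_on {0..1} g2" "t \<in> {0..1}"
  shows "Pf g1 t - Pf g2 t = Pf (\<lambda>s. g1 s - g2 s) t"
proof -
  have "Pf g1 t - Pf g2 t = integral {0..t} (\<lambda>s. Qf g1 s - Qf g2 s)"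
    unfolding Pf_def
    by (rule integral_diff[symmetric];
      rule integrable_on_subinterval[OF integrable_continuous_interval[OF Q_cont]]) (use assms in auto)
  also have "\<dots> = Pf (\<lambda>s. g1 s - g2 s) t"
    unfolding Pf_def by (rule integral_cong) (use Q_diff[OF assms(1,2)] assms(3) in auto)
  finally show ?thesis .
qed

lemma P_local:
  assumes "\<And>s. s \<in> {0..t} \<Longrightarrow> g1 s = g2 s"
  shows "Pf g1 t = Pf g2 t"
proof -
  have "Qf g1 r = Qf g2 r" if "r \<in> {0..t}" for r
    unfolding Qf_def by (rule integral_cong) (use assms that in auto)
  then show ?thesis unfolding Pf_def by (rule integral_cong)
qed

lemma P_zero: "Pf g 0 = 0"
  unfolding Pf_def by simp

lemma P_lip:
  assumes "continuous_on {0..1} g" "\<And>s. s \<in> {0..1} \<Longrightarrow> \<bar>g s\<bar> \<le> M" "M \<ge> 0"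
    and "x \<in> {0..1}" "z \<in> {0..1}"
  shows "\<bar>Pf g x - Pf g z\<bar> \<le> M * \<bar>x - z\<bar>"
proof -
  have gen: "\<bar>Pf g v - Pf g u\<bar> \<le> M * (v - u)" if "0 \<le> u" "u \<le> v" "v \<le> 1" for u v
  proof -
    have qi: "Qf g integrable_on {0..v}"
      by (rule integrable_on_subinterval[OF integrable_continuous_interval[OF Q_cont[OF assms(1)]]])
         (use that in auto)
    have "Pf g v - Pf g u = integral {u..v} (Qf g)"
      using Henstock_Kurzweil_Integration.integral_combine[OF that(1,2) qi] unfolding Pf_def by simp
    also have "\<bar>\<dots>\<bar> \<le> M * measure lborel {u..v}"
    proof -
      have "(Qf g) integrable_on {u..v}" by (rule integrable_on_subinterval[OF qi]) (use that in auto)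
      then show ?thesis
        using has_integral_bound_real[OF assms(3) finite.emptyI integrable_integral, of "Qf g" u v]
          Q_bound[OF assms(1) _ assms(2,3)] that by auto
    qed
    also have "\<dots> = M * (v - u)" using that by simp
    finally show ?thesis .
  qed
  show ?thesis
  proof (cases "z \<le> x")
    case True then show ?thesis using gen[of z x] assms by auto
  next
    case False then show ?thesis using gen[of x z] assms by (auto simp: abs_minus_commute)
  qed
qed



definition clp :: "real \<Rightarrow> real" where "clp z = max (-2) (min 2 z)"
definition FF :: "(real \<Rightarrow> real \<Rightarrow> real) \<Rightarrow> real \<Rightarrow> real \<Rightarrow> real" where
  "FF f s z = f s (clp z)"

lemma clp_in: "clp z \<in> {-2..2}" unfolding clp_def by auto
lemma clp_lip: "\<bar>clp z - clp z'\<bar> \<le> \<bar>z - z'\<bar>" unfolding clp_def by auto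
lemma clp_id: "\<bar>z\<bar> \<le> 2 \<Longrightarrow> clp z = z" unfolding clp_def by auto
lemma clp_cont: "continuous_on UNIV clp" unfolding clp_def[abs_def]
  by (intro continuous_intros)

lemma FF_bound:
  assumes fc: "continuous_on ({0..1} \<times> UNIV) (\<lambda>(t, y). f t y)"
  obtains C where "C > 0" "\<And>s z. s \<in> {0..1} \<Longrightarrow> \<bar>FF f s z\<bar> \<le> C"
proof -
  have "continuous_on ({0..1} \<times> {-2..2}) (\<lambda>(t, y). f t y)"
    by (rule continuous_on_subset[OF fc]) auto
  then have "compact ((\<lambda>(t, y). f t y) ` ({0..1} \<times> {-2..2::real}))"
    by (intro compact_continuous_image compact_Times) auto
  then obtain C where C: "C > 0" "\<forall>x\<in>{0..1}. \<forall>y\<in>{-2..2::real}. \<bar>f x y\<bar> \<le> C"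
    unfolding compact_eq_bounded_closed bounded_pos by auto
  show ?thesis
  proof (rule that[OF C(1)])
    fix s z assume "s \<in> {0..1::real}"
    then show "\<bar>FF f s z\<bar> \<le> C" using C(2) clp_in[of z] unfolding FF_def by blast
  qed
qed

lemma FF_unif:
  assumes fc: "continuous_on ({0..1} \<times> UNIV) (\<lambda>(t, y). f t y)" and e: "e > 0"
  obtains d where "d > 0" "\<And>s z z'. s \<in> {0..1} \<Longrightarrow> \<bar>z - z'\<bar> < d \<Longrightarrow> \<bar>FF f s z - FF f s z'\<bar> < e"
proof -
  have "continuous_on ({0..1} \<times> {-2..2}) (\<lambda>(t, y). f t y)"
    by (rule continuous_on_subset[OF fc]) auto
  then have "uniformly_continuous_on ({0..1} \<times> {-2..2::real}) (\<lambda>(t, y). f t y)"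
    by (intro compact_uniformly_continuous compact_Times) auto
  then obtain d where d: "d > 0" "\<And>x x'. x \<in> {0..1} \<times> {-2..2::real} \<Longrightarrow> x' \<in> {0..1} \<times> {-2..2} \<Longrightarrow>
      dist x' x < d \<Longrightarrow> dist ((\<lambda>(t, y). f t y) x') ((\<lambda>(t, y). f t y) x) < e"
    unfolding uniformly_continuous_on_def using e by metis
  show ?thesis
  proof (rule that[OF d(1)])
    fix s z z' assume s: "s \<in> {0..1::real}" and zz: "\<bar>z - z'\<bar> < d"
    have "dist (s, clp z) (s, clp z') = \<bar>clp z - clp z'\<bar>"
      by (simp add: dist_Pair_Pair dist_real_def)
    also have "\<dots> < d" using clp_lip[of z z'] zz by linarith
    finally have "dist (s, clp z) (s, clp z') < d" .
    then have "dist ((\<lambda>(t, y). f t y) (s, clp z)) ((\<lambda>(t, y). f t y) (s, clp z')) < e"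
      using d(2)[of "(s, clp z')" "(s, clp z)"] s clp_in[of z] clp_in[of z'] by auto
    then show "\<bar>FF f s z - FF f s z'\<bar> < e" unfolding FF_def by (simp add: dist_real_def)
  qed
qed

lemma FF_comp_cont:
  assumes fc: "continuous_on ({0..1} \<times> UNIV) (\<lambda>(t, y). f t y)"
    and Y: "continuous_on {0..1} Y" and h: "continuous_on {0..1} h" and hr: "h ` {0..1} \<subseteq> {0..1}"
  shows "continuous_on {0..1} (\<lambda>s. c * FF f s (Y (h s)))"
proof -
  have 1: "continuous_on {0..1} (\<lambda>s. clp (Y (h s)))"
    by (rule continuous_on_compose2[OF clp_cont continuous_on_compose2[OF Y h hr]]) auto
  have "continuous_on {0..1} (\<lambda>s. (\<lambda>(t, y). f t y) (s, clp (Y (h s))))"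
    by (rule continuous_on_compose2[OF fc continuous_on_Pair[OF continuous_on_id 1]]) auto
  then show ?thesis unfolding FF_def by (auto intro: continuous_intros)
qed



definition gY :: "(real \<Rightarrow> real \<Rightarrow> real) \<Rightarrow> real \<Rightarrow> real \<Rightarrow> (real \<Rightarrow> real) \<Rightarrow> real \<Rightarrow> real" where
  "gY f lam d Y = (\<lambda>s. - lam * FF f s (Y (max 0 (s - d))))"
definition Phi :: "(real \<Rightarrow> real \<Rightarrow> real) \<Rightarrow> real \<Rightarrow> real \<Rightarrow> real \<times> real \<Rightarrow> (real \<Rightarrow> real) \<Rightarrow> real \<Rightarrow> real" where
  "Phi f lam d p Y = (\<lambda>t. fst p + snd p * t + Pf (gY f lam d Y) t)"
definition Xk :: "(real \<Rightarrow> real \<Rightarrow> real) \<Rightarrow> real \<Rightarrow> real \<Rightarrow> real \<times> real \<Rightarrow> nat \<Rightarrow> real \<Rightarrow> real" where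
  "Xk f lam d p k = (Phi f lam d p ^^ k) (\<lambda>t. fst p)"

lemma Xk_Suc: "Xk f lam d p (Suc k) = Phi f lam d p (Xk f lam d p k)"
  unfolding Xk_def by simp

context
  fixes f :: "real \<Rightarrow> real \<Rightarrow> real" and lam d :: real
  assumes fc: "continuous_on ({0..1} \<times> UNIV) (\<lambda>(t, y). f t y)" and dpos: "d > 0"
begin

lemma gY_cont: "continuous_on {0..1} Y \<Longrightarrow> continuous_on {0..1} (gY f lam d Y)"
  unfolding gY_def
  by (rule FF_comp_cont[OF fc]) (use dpos in \<open>auto intro!: continuous_intros\<close>)

lemma gY_bound: "(\<And>s z. s \<in> {0..1} \<Longrightarrow> \<bar>FF f s z\<bar> \<le> C) \<Longrightarrow> s \<in> {0..1} \<Longrightarrow> \<bar>gY f lam d Y s\<bar> \<le> \<bar>lam\<bar> * C"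
  unfolding gY_def by (simp add: abs_mult mult_left_mono)

lemma Phi_cont: "continuous_on {0..1} Y \<Longrightarrow> continuous_on {0..1} (Phi f lam d p Y)"
  unfolding Phi_def by (intro continuous_intros P_cont gY_cont)

lemma Phi_deriv:
  assumes "continuous_on {0..1} Y" "t \<in> {0..1}"
  shows "(Phi f lam d p Y has_real_derivative (snd p + Qf (gY f lam d Y) t)) (at t within {0..1})"
  unfolding Phi_def
  by (rule derivative_eq_intros P_deriv[OF gY_cont[OF assms(1)] assms(2)] | simp)+

lemma Phi_deriv_cont:
  assumes "continuous_on {0..1} Y"
  shows "continuous_on {0..1} (\<lambda>t. snd p + Qf (gY f lam d Y) t)"
  by (intro continuous_intros Q_cont gY_cont assms)

lemma X_cont: "continuous_on {0..1} (Xk f lam d p k)"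
  by (induction k) (auto simp: Xk_Suc Xk_def[of _ _ _ _ 0] intro: Phi_cont continuous_intros)

lemma Phi_local:
  assumes r: "r \<ge> 0" and eq: "\<And>s. s \<in> {0..1} \<Longrightarrow> s \<le> r \<Longrightarrow> Y s = Y' s"
    and t: "t \<in> {0..1}" "t \<le> r + d"
  shows "Phi f lam d p Y t = Phi f lam d p Y' t"
proof -
  have "Pf (gY f lam d Y) t = Pf (gY f lam d Y') t"
  proof (rule P_local)
    fix s assume s: "s \<in> {0..t}"
    have "max 0 (s - d) \<in> {0..1}" "max 0 (s - d) \<le> r" using s t r dpos by auto
    then show "gY f lam d Y s = gY f lam d Y' s" unfolding gY_def using eq by simp
  qed
  then show ?thesis unfolding Phi_def by simp
qed

lemma X_local: "t \<in> {0..1} \<Longrightarrow> t \<le> real k * d \<Longrightarrow> Xk f lam d p k t = Xk f lam d p (Suc k) t"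
proof (induction k arbitrary: t)
  case 0
  then have "t = 0" by auto
  then show ?case by (simp add: Xk_def Phi_def P_zero)
next
  case (Suc k)
  show ?case unfolding Xk_Suc[of _ _ _ _ "Suc k"] Xk_Suc[of _ _ _ _ k]
  proof (rule Phi_local[of "real k * d"])
    show "0 \<le> real k * d" using dpos by simp
    show "t \<le> real k * d + d" using Suc.prems by (simp add: algebra_simps)
  qed (use Suc in \<open>auto simp: Xk_Suc\<close>)
qed

definition NN :: nat where "NN = nat \<lceil>1 / d\<rceil>"

lemma NN: "1 \<le> real NN * d"
proof -
  have "1 / d \<le> real NN" unfolding NN_def by linarith
  then show ?thesis using dpos by (simp add: divide_le_eq mult.commute)
qed

lemma y_fix: "t \<in> {0..1} \<Longrightarrow> Xk f lam d p (Suc NN) t = Phi f lam d p (Xk f lam d p (Suc NN)) t"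
  using X_local[of t "Suc NN" p] NN dpos
  by (simp add: Xk_Suc[of _ _ _ _ "Suc NN"] algebra_simps)

lemma X_pcont:
  "e > 0 \<Longrightarrow> \<exists>\<eta>>0. \<forall>p q. dist p q < \<eta> \<longrightarrow> (\<forall>t\<in>{0..1}. \<bar>Xk f lam d p k t - Xk f lam d q k t\<bar> < e)"
proof (induction k arbitrary: e)
  case 0
  show ?case
  proof (intro exI[of _ e] conjI allI impI ballI)
    fix p q :: "real \<times> real" and t assume "dist p q < e"
    then show "\<bar>Xk f lam d p 0 t - Xk f lam d q 0 t\<bar> < e"
      using dist_fst_le[of p q] by (simp add: Xk_def dist_real_def)
  qed (use 0 in auto)
next
  case (Suc k)
  define e' where "e' = e / (2 * (\<bar>lam\<bar> + 1))"
  have e': "e' > 0" using Suc.prems unfolding e'_def by (auto intro!: divide_pos_pos)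
  obtain dF where dF: "dF > 0" "\<And>s z z'. s \<in> {0..1} \<Longrightarrow> \<bar>z - z'\<bar> < dF \<Longrightarrow> \<bar>FF f s z - FF f s z'\<bar> < e'"
    using FF_unif[OF fc e'] by blast
  obtain \<eta>1 where \<eta>1: "\<eta>1 > 0" "\<forall>p q. dist p q < \<eta>1 \<longrightarrow> (\<forall>t\<in>{0..1}. \<bar>Xk f lam d p k t - Xk f lam d q k t\<bar> < dF)"
    using Suc.IH[OF dF(1)] by blast
  show ?case
  proof (intro exI[of _ "min \<eta>1 (e/4)"] conjI allI impI ballI)
    show "min \<eta>1 (e/4) > 0" using \<eta>1 Suc.prems by simp
    fix p q :: "real \<times> real" and t :: real assume pq: "dist p q < min \<eta>1 (e/4)" and t: "t \<in> {0..1}"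
    let ?Y = "Xk f lam d p k" and ?Y' = "Xk f lam d q k"
    have gd: "\<bar>gY f lam d ?Y s - gY f lam d ?Y' s\<bar> \<le> \<bar>lam\<bar> * e'" if s: "s \<in> {0..1}" for s
    proof -
      have "max 0 (s - d) \<in> {0..1}" using s dpos by auto
      moreover have "dist p q < \<eta>1" using pq by simp
      ultimately have "\<bar>?Y (max 0 (s - d)) - ?Y' (max 0 (s - d))\<bar> < dF" using \<eta>1(2) by blast
      then have "\<bar>FF f s (?Y (max 0 (s - d))) - FF f s (?Y' (max 0 (s - d)))\<bar> < e'"
        using dF(2) s by blast
      then show ?thesis unfolding gY_def
        by (simp add: abs_mult right_diff_distrib[symmetric] mult_left_mono)
    qed
    have "\<bar>Pf (gY f lam d ?Y) t - Pf (gY f lam d ?Y') t\<bar> \<le> \<bar>lam\<bar> * e'"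
      unfolding P_diff[OF gY_cont[OF X_cont] gY_cont[OF X_cont] t]
      by (rule P_bound) (use t gd e' in \<open>auto intro!: continuous_intros gY_cont X_cont\<close>)
    also have "\<dots> < e / 2"
    proof -
      have "\<bar>lam\<bar> * e' = e / 2 * (\<bar>lam\<bar> / (\<bar>lam\<bar> + 1))" unfolding e'_def by (simp add: field_simps)
      also have "\<dots> < e / 2" using Suc.prems by (simp add: mult_less_cancel_left1 divide_less_eq)
      finally show ?thesis .
    qed
    finally have P: "\<bar>Pf (gY f lam d ?Y) t - Pf (gY f lam d ?Y') t\<bar> < e / 2" .
    have a: "\<bar>fst p - fst q\<bar> < e/4" using dist_fst_le[of p q] pq by (simp add: dist_real_def)
    have b: "\<bar>snd p - snd q\<bar> < e/4" using dist_snd_le[of p q] pq by (simp add: dist_real_def)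
    have "\<bar>snd p * t - snd q * t\<bar> \<le> \<bar>snd p - snd q\<bar>"
      using t by (simp add: left_diff_distrib[symmetric] abs_mult mult_left_le)
    then show "\<bar>Xk f lam d p (Suc k) t - Xk f lam d q (Suc k) t\<bar> < e"
      unfolding Xk_Suc Phi_def using P a b by linarith
  qed
qed

end



lemma abs_sum4: "\<bar>(a::real) + b + c + d\<bar> \<le> \<bar>a\<bar> + \<bar>b\<bar> + \<bar>c\<bar> + \<bar>d\<bar>"
  using abs_triangle_ineq[of "a + b + c" d] abs_triangle_ineq[of "a + b" c] abs_triangle_ineq[of a b] by linarith

lemma dist_pair_le: "dist (a::real, b::real) (c, d) \<le> \<bar>a - c\<bar> + \<bar>b - d\<bar>"
  unfolding dist_Pair_Pair dist_real_def using sqrt_sum_squares_le_sum_abs[of "a - c" "b - d"] by simp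

lemma S_compact: "compact {p::real \<times> real. \<bar>fst p\<bar> + \<bar>snd p\<bar> \<le> 1}"
proof -
  have "closed {p::real \<times> real. \<bar>fst p\<bar> + \<bar>snd p\<bar> \<le> 1}"
    by (intro closed_Collect_le continuous_intros)
  moreover have "bounded {p::real \<times> real. \<bar>fst p\<bar> + \<bar>snd p\<bar> \<le> 1}"
    unfolding bounded_iff
  proof (intro exI[of _ 1] ballI)
    fix p :: "real \<times> real" assume "p \<in> {p. \<bar>fst p\<bar> + \<bar>snd p\<bar> \<le> 1}"
    then have "\<bar>fst p\<bar> + \<bar>snd p\<bar> \<le> 1" by simp
    moreover have "norm p = sqrt ((fst p)\<^sup>2 + (snd p)\<^sup>2)" by (cases p) (simp add: norm_Pair)
    ultimately show "norm p \<le> 1" using sqrt_sum_squares_le_sum_abs[of "fst p" "snd p"] by linarith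
  qed
  ultimately show ?thesis by (simp add: compact_eq_bounded_closed)
qed

lemma S_convex: "convex {p::real \<times> real. \<bar>fst p\<bar> + \<bar>snd p\<bar> \<le> 1}"
  unfolding convex_def
proof (intro ballI allI impI)
  fix x y :: "real \<times> real" and u v :: real
  assume x: "x \<in> {p. \<bar>fst p\<bar> + \<bar>snd p\<bar> \<le> 1}" and y: "y \<in> {p. \<bar>fst p\<bar> + \<bar>snd p\<bar> \<le> 1}"
    and uv: "0 \<le> u" "0 \<le> v" "u + v = 1"
  have "\<bar>u * fst x + v * fst y\<bar> + \<bar>u * snd x + v * snd y\<bar>
      \<le> u * (\<bar>fst x\<bar> + \<bar>snd x\<bar>) + v * (\<bar>fst y\<bar> + \<bar>snd y\<bar>)"
    using uv abs_triangle_ineq[of "u * fst x" "v * fst y"] abs_triangle_ineq[of "u * snd x" "v * snd y"]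
    by (simp add: abs_mult algebra_simps)
  also have "\<dots> \<le> u * 1 + v * 1"
    using x y uv by (intro add_mono mult_left_mono) auto
  finally show "u *\<^sub>R x + v *\<^sub>R y \<in> {p. \<bar>fst p\<bar> + \<bar>snd p\<bar> \<le> 1}" using uv by simp
qed

lemma approx_solution:
  fixes f :: "real \<Rightarrow> real \<Rightarrow> real" and A B :: "real \<Rightarrow> real" and lam d C :: real
  assumes fc: "continuous_on ({0..1} \<times> UNIV) (\<lambda>(t, y). f t y)"
    and bvA: "bounded_variation_on A 0 1" and bvB: "bounded_variation_on B 0 1"
    and Cpos: "C > 0" and Cb: "\<And>s z. s \<in> {0..1} \<Longrightarrow> \<bar>FF f s z\<bar> \<le> C"
    and lamC: "2 * \<bar>lam\<bar> * C \<le> 1 - (total_variation A 0 1 + total_variation (\<lambda>s. A s - B s) 0 1)"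
    and dpos: "d > 0"
  shows "\<exists>a b y. continuous_on {0..1} y \<and> (\<forall>t\<in>{0..1}. y t = a + b * t + Pf (gY f lam d y) t)
     \<and> \<bar>a\<bar> + \<bar>b\<bar> \<le> 1 \<and> (\<forall>t\<in>{0..1}. \<bar>y t\<bar> \<le> 1 + \<bar>lam\<bar> * C)
     \<and> (\<forall>x\<in>{0..1}. \<forall>z\<in>{0..1}. \<bar>y x - y z\<bar> \<le> (1 + \<bar>lam\<bar> * C) * \<bar>x - z\<bar>)
     \<and> has_RS_integral y A 0 1 a \<and> has_RS_integral y B 0 1 (y 1)"
proof -
  define V1 where "V1 = total_variation A 0 1"
  define V2 where "V2 = total_variation (\<lambda>s. A s - B s) 0 1"
  have bvAB: "bounded_variation_on (\<lambda>s. A s - B s) 0 1" by (rule bv_diff[OF bvA bvB])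
  have V1: "V1 \<ge> 0" unfolding V1_def by (rule var_nonneg[OF bvA])
  have V2: "V2 \<ge> 0" unfolding V2_def by (rule var_nonneg[OF bvAB])
  define S where "S = {p::real \<times> real. \<bar>fst p\<bar> + \<bar>snd p\<bar> \<le> 1}"
  define yp where "yp p = Xk f lam d p (Suc (NN d))" for p
  define Y0 where "Y0 p = Xk f lam d p (NN d)" for p
  have yp_eq: "yp p = Phi f lam d p (Y0 p)" for p unfolding yp_def Y0_def by (simp add: Xk_Suc)
  have Y0c: "continuous_on {0..1} (Y0 p)" for p unfolding Y0_def by (rule X_cont[OF fc dpos])
  have ypc: "continuous_on {0..1} (yp p)" for p unfolding yp_def by (rule X_cont[OF fc dpos])
  have yder: "\<And>t. t \<in> {0..1} \<Longrightarrow> (yp p has_real_derivative (snd p + Qf (gY f lam d (Y0 p)) t)) (at t within {0..1})"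
    for p unfolding yp_eq by (rule Phi_deriv[OF fc dpos Y0c])
  have ydc: "continuous_on {0..1} (\<lambda>t. snd p + Qf (gY f lam d (Y0 p)) t)" for p
    by (rule Phi_deriv_cont[OF fc dpos Y0c])
  have hA: "has_RS_integral (yp p) A 0 1 (RSI (yp p) A)" for p by (rule RSI_has[OF bvA yder ydc])
  have hB: "has_RS_integral (yp p) B 0 1 (RSI (yp p) B)" for p by (rule RSI_has[OF bvB yder ydc])
  have yfix: "yp p t = Phi f lam d p (yp p) t" if "t \<in> {0..1}" for p t
    unfolding yp_def by (rule y_fix[OF fc dpos that])
  have Pb: "\<bar>Pf (gY f lam d Y) t\<bar> \<le> \<bar>lam\<bar> * C" if "continuous_on {0..1} Y" "t \<in> {0..1}" for Y t
    by (rule P_bound[OF gY_cont[OF fc dpos that(1)] that(2) gY_bound[OF fc dpos Cb]]) (use Cpos in auto)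
  have ybound: "\<bar>yp p t\<bar> \<le> \<bar>fst p\<bar> + \<bar>snd p\<bar> + \<bar>lam\<bar> * C" if "t \<in> {0..1}" for p t
  proof -
    have "\<bar>snd p * t\<bar> \<le> \<bar>snd p\<bar>" using that by (simp add: abs_mult mult_left_le)
    then show ?thesis unfolding yp_eq Phi_def using Pb[OF Y0c that, of p] by linarith
  qed
  define G where "G p = (RSI (yp p) A, RSI (yp p) B - yp p 1 + fst p + snd p - RSI (yp p) A)" for p
  have GS: "G ` S \<subseteq> S"
  proof
    fix w assume "w \<in> G ` S"
    then obtain p where p: "p \<in> S" "w = G p" by auto
    let ?M = "1 + \<bar>lam\<bar> * C"
    have M: "\<bar>yp p t\<bar> \<le> ?M" if "t \<in> {0..1}" for t using ybound[OF that, of p] p(1) unfolding S_def by auto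
    have M0: "?M \<ge> 0" using Cpos by simp
    have 1: "\<bar>RSI (yp p) A\<bar> \<le> ?M * V1" unfolding V1_def by (rule RS_bound[OF hA bvA M M0])
    have 2: "\<bar>RSI (yp p) A - RSI (yp p) B\<bar> \<le> ?M * V2"
      unfolding V2_def by (rule RS_bound[OF RS_diff_integrator[OF hA hB] bvAB M M0])
    have 3: "\<bar>yp p 1 - fst p - snd p\<bar> \<le> \<bar>lam\<bar> * C"
      using yfix[of 1 p] Pb[OF ypc, of 1 p] unfolding Phi_def by simp
    have "\<bar>fst w\<bar> + \<bar>snd w\<bar> \<le> ?M * V1 + ?M * V2 + \<bar>lam\<bar> * C"
    proof -
      have "RSI (yp p) B - yp p 1 + fst p + snd p - RSI (yp p) A
          = - ((RSI (yp p) A - RSI (yp p) B) + (yp p 1 - fst p - snd p))" by (simp add: algebra_simps)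
      then have "\<bar>RSI (yp p) B - yp p 1 + fst p + snd p - RSI (yp p) A\<bar>
          \<le> \<bar>RSI (yp p) A - RSI (yp p) B\<bar> + \<bar>yp p 1 - fst p - snd p\<bar>"
        using abs_triangle_ineq[of "RSI (yp p) A - RSI (yp p) B" "yp p 1 - fst p - snd p"] by (simp only: abs_minus_cancel)
      then show ?thesis unfolding p(2) G_def fst_conv snd_conv using 1 2 3 by linarith
    qed
    also have "\<dots> = (V1 + V2) + \<bar>lam\<bar> * C * (V1 + V2) + \<bar>lam\<bar> * C" by (simp add: algebra_simps)
    also have "\<dots> \<le> (V1 + V2) + \<bar>lam\<bar> * C * 1 + \<bar>lam\<bar> * C"
    proof -
      have "V1 + V2 \<le> 1"
      proof -
        have "0 \<le> 2 * \<bar>lam\<bar> * C" using Cpos by simp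
        then show ?thesis using lamC unfolding V1_def V2_def by linarith
      qed
      then have "\<bar>lam\<bar> * C * (V1 + V2) \<le> \<bar>lam\<bar> * C" by (rule mult_left_le) (use Cpos in auto)
      then show ?thesis by (simp add: mult.commute)
    qed
    also have "\<dots> \<le> 1" using lamC unfolding V1_def V2_def by (simp add: mult.commute mult.left_commute)
    finally show "w \<in> S" unfolding S_def by simp
  qed
  have Gc: "continuous_on S G"
    unfolding continuous_on_iff
  proof (intro ballI allI impI)
    fix p :: "real \<times> real" and e :: real assume p: "p \<in> S" and e: "e > (0::real)"
    define K where "K = V1 + V2 + 2"
    have K: "K > 0" unfolding K_def using V1 V2 by simp
    define e' where "e' = e / (2 * K)"
    have e': "e' > 0" unfolding e'_def using e K by simp
    obtain \<eta>0 where \<eta>0: "\<eta>0 > 0" "\<forall>p q. dist p q < \<eta>0 \<longrightarrow>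
        (\<forall>t\<in>{0..1}. \<bar>Xk f lam d p (Suc (NN d)) t - Xk f lam d q (Suc (NN d)) t\<bar> < e')"
      using X_pcont[OF fc dpos e'] by blast
    show "\<exists>\<eta>>0. \<forall>q\<in>S. dist q p < \<eta> \<longrightarrow> dist (G q) (G p) < e"
    proof (intro exI[of _ "min \<eta>0 (e/8)"] conjI ballI impI)
      show "min \<eta>0 (e/8) > 0" using \<eta>0 e by simp
      fix q assume q: "q \<in> S" and dq: "dist q p < min \<eta>0 (e/8)"
      have dq': "dist q p < \<eta>0" using dq by simp
      have close: "\<bar>yp q t - yp p t\<bar> \<le> e'" if "t \<in> {0..1}" for t
        using \<eta>0(2) dq' that unfolding yp_def by (meson less_imp_le)
      have e'0: "e' \<ge> 0" using e' by simp
      have D1: "\<bar>RSI (yp q) A - RSI (yp p) A\<bar> \<le> e' * V1"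
        unfolding V1_def by (rule RS_bound[OF RS_diff_integrand[OF hA hA] bvA close e'0])
      have D2: "\<bar>(RSI (yp q) A - RSI (yp q) B) - (RSI (yp p) A - RSI (yp p) B)\<bar> \<le> e' * V2"
        unfolding V2_def
        by (rule RS_bound[OF RS_diff_integrand[OF RS_diff_integrator[OF hA hB] RS_diff_integrator[OF hA hB]]
              bvAB close e'0])
      have D3: "\<bar>yp q 1 - yp p 1\<bar> \<le> e'" using close[of 1] by simp
      have D4: "\<bar>fst q - fst p\<bar> < e/8" using dist_fst_le[of q p] dq by (simp add: dist_real_def)
      have D5: "\<bar>snd q - snd p\<bar> < e/8" using dist_snd_le[of q p] dq by (simp add: dist_real_def)
      have "dist (G q) (G p) \<le> \<bar>fst (G q) - fst (G p)\<bar> + \<bar>snd (G q) - snd (G p)\<bar>"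
        using dist_pair_le[of "fst (G q)" "snd (G q)" "fst (G p)" "snd (G p)"] by simp
      also have "\<dots> \<le> e' * V1 + (e' * V2 + e' + e/8 + e/8)"
      proof -
        let ?X = "(RSI (yp q) A - RSI (yp q) B) - (RSI (yp p) A - RSI (yp p) B)"
        have eq1: "fst (G q) - fst (G p) = RSI (yp q) A - RSI (yp p) A" unfolding G_def by simp
        have eq2: "snd (G q) - snd (G p) = - ?X + (- (yp q 1 - yp p 1)) + (fst q - fst p) + (snd q - snd p)"
          unfolding G_def by (simp add: algebra_simps)
        have "\<bar>snd (G q) - snd (G p)\<bar> \<le> \<bar>?X\<bar> + \<bar>yp q 1 - yp p 1\<bar> + \<bar>fst q - fst p\<bar> + \<bar>snd q - snd p\<bar>"
          unfolding eq2 using abs_sum4[of "- ?X" "- (yp q 1 - yp p 1)" "fst q - fst p" "snd q - snd p"]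
          by (simp only: abs_minus_cancel)
        then show ?thesis unfolding eq1 using D1 D2 D3 D4 D5 by linarith
      qed
      also have "\<dots> = e' * (V1 + V2 + 1) + e/4" by (simp add: algebra_simps)
      also have "\<dots> < e"
      proof -
        have "e' * (V1 + V2 + 1) \<le> e' * K" unfolding K_def using e' by (intro mult_left_mono) auto
        also have "\<dots> = e / 2" unfolding e'_def using K by simp
        finally show ?thesis using e by simp
      qed
      finally show "dist (G q) (G p) < e" .
    qed
  qed
  obtain p where p: "p \<in> S" "G p = p"
  proof -
    have "(0,0) \<in> S" unfolding S_def by simp
    then have Sne: "S \<noteq> {}" by blast
    have GS': "G \<in> S \<rightarrow> S" using GS by auto
    show ?thesis using brouwer[OF S_compact[folded S_def] S_convex[folded S_def] Sne Gc GS'] that by blast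
  qed
  have GA: "RSI (yp p) A = fst p" using p(2) unfolding G_def by (metis fst_conv)
  have GB: "RSI (yp p) B = yp p 1" using p(2) unfolding G_def by (metis snd_conv fst_conv add_diff_cancel_left' diff_add_cancel add.commute diff_diff_eq2 eq_diff_eq prod.collapse)
  let ?y = "yp p"
  have lip: "\<bar>?y x - ?y z\<bar> \<le> (1 + \<bar>lam\<bar> * C) * \<bar>x - z\<bar>" if "x \<in> {0..1}" "z \<in> {0..1}" for x z
  proof -
    have "?y x - ?y z = snd p * (x - z) + (Pf (gY f lam d ?y) x - Pf (gY f lam d ?y) z)"
      using yfix[OF that(1), of p] yfix[OF that(2), of p] unfolding Phi_def by (simp add: algebra_simps)
    moreover have "\<bar>Pf (gY f lam d ?y) x - Pf (gY f lam d ?y) z\<bar> \<le> \<bar>lam\<bar> * C * \<bar>x - z\<bar>"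
      by (rule P_lip[OF gY_cont[OF fc dpos ypc] gY_bound[OF fc dpos Cb] _ that]) (use Cpos in auto)
    moreover have "\<bar>snd p * (x - z)\<bar> \<le> 1 * \<bar>x - z\<bar>"
      using p(1) unfolding S_def abs_mult by (intro mult_right_mono) auto
    ultimately show ?thesis by (simp add: algebra_simps)
  qed
  have c1: "\<forall>t\<in>{0..1}. ?y t = fst p + snd p * t + Pf (gY f lam d ?y) t"
    using yfix[of _ p] unfolding Phi_def by simp
  have c2: "\<bar>fst p\<bar> + \<bar>snd p\<bar> \<le> 1" using p(1) unfolding S_def by simp
  have c3: "\<forall>t\<in>{0..1}. \<bar>?y t\<bar> \<le> 1 + \<bar>lam\<bar> * C"
    using ybound[of _ p] p(1) unfolding S_def by fastforce
  have c4: "has_RS_integral ?y A 0 1 (fst p)" using hA[of p] GA by simp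
  have c5: "has_RS_integral ?y B 0 1 (?y 1)" using hB[of p] GB by simp
  show ?thesis using ypc[of p] c1 c2 c3 lip c4 c5 by blast
qed



lemma RS_limit:
  assumes bv: "bounded_variation_on g 0 1"
    and h: "\<And>n. has_RS_integral (Y n) g 0 1 (c n)" and hx: "has_RS_integral x g 0 1 I"
    and u: "\<And>e. e > 0 \<Longrightarrow> \<exists>N. \<forall>n\<ge>N. \<forall>t\<in>{0..1}. \<bar>Y n t - x t\<bar> < e"
  shows "c \<longlonglongrightarrow> I"
proof (rule LIMSEQ_I)
  fix e :: real assume e: "e > 0"
  define V where "V = total_variation g 0 1"
  have V: "V \<ge> 0" unfolding V_def by (rule var_nonneg[OF bv])
  define e' where "e' = e / (2 * (V + 1))"
  have e': "e' > 0" unfolding e'_def using e V by simp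
  obtain N where N: "\<forall>n\<ge>N. \<forall>t\<in>{0..1}. \<bar>Y n t - x t\<bar> < e'" using u[OF e'] by blast
  show "\<exists>N. \<forall>n\<ge>N. norm (c n - I) < e"
  proof (intro exI allI impI)
    fix n assume n: "n \<ge> N"
    have "\<bar>c n - I\<bar> \<le> e' * V" unfolding V_def
      by (rule RS_bound[OF RS_diff_integrand[OF h hx] bv]) (use N n e' in \<open>auto intro: less_imp_le\<close>)
    also have "\<dots> \<le> e' * (V + 1)" using e' by (intro mult_left_mono) auto
    also have "\<dots> = e / 2" unfolding e'_def using V by (simp add: field_simps)
    also have "\<dots> < e" using e by simp
    finally show "norm (c n - I) < e" by simp
  qed
qed

lemma unif_pointwise:
  fixes Y :: "nat \<Rightarrow> 'a \<Rightarrow> real"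
  assumes u: "\<And>e. e > 0 \<Longrightarrow> \<exists>N. \<forall>n\<ge>N. \<forall>t\<in>S. \<bar>Y n t - x t\<bar> < e" and t: "t \<in> S"
  shows "(\<lambda>n. Y n t) \<longlonglongrightarrow> x t"
proof (rule LIMSEQ_I)
  fix e :: real assume "e > 0"
  then obtain N where "\<forall>n\<ge>N. \<forall>t\<in>S. \<bar>Y n t - x t\<bar> < e" using u by blast
  then show "\<exists>N. \<forall>n\<ge>N. norm (Y n t - x t) < e" using t by auto
qed



theorem theorem4p17:
  fixes f :: "real \<Rightarrow> real \<Rightarrow> real" and A B :: "real \<Rightarrow> real"
  assumes "continuous_on ({0..1} \<times> UNIV) (\<lambda>(t, y). f t y)"
    and "bounded_variation_on A 0 1" and "bounded_variation_on B 0 1"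
    and "total_variation A 0 1 + total_variation (\<lambda>s. A s - B s) 0 1 < 1"
  shows "\<exists>lam0 > 0. \<forall>lam::real. \<bar>lam\<bar> \<le> lam0 \<longrightarrow>
           (\<exists>x x' x'' :: real \<Rightarrow> real.
              (\<forall>t \<in> {0..1}. (x has_real_derivative x' t) (at t within {0..1})
                             \<and> (x' has_real_derivative x'' t) (at t within {0..1}))
            \<and> continuous_on {0..1} x''
            \<and> (\<forall>t \<in> {0..1}. x'' t = - lam * f t (x t))
            \<and> has_RS_integral x A 0 1 (x 0)
            \<and> has_RS_integral x B 0 1 (x 1))"
proof -
  note fc = assms(1) and bvA = assms(2) and bvB = assms(3)
  obtain C where C: "C > 0" "\<And>s z. s \<in> {0..1} \<Longrightarrow> \<bar>FF f s z\<bar> \<le> C" using FF_bound[OF fc] by blast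
  define \<theta> where "\<theta> = total_variation A 0 1 + total_variation (\<lambda>s. A s - B s) 0 1"
  have \<theta>: "0 \<le> \<theta>" "\<theta> < 1"
    using var_nonneg[OF bvA] var_nonneg[OF bv_diff[OF bvA bvB]] assms(4) unfolding \<theta>_def by auto
  define lam0 where "lam0 = (1 - \<theta>) / (2 * C)"
  have lam0: "lam0 > 0" using \<theta> C unfolding lam0_def by simp
  show ?thesis
  proof (intro exI[of _ lam0] conjI allI impI lam0)
    fix lam :: real assume hl: "\<bar>lam\<bar> \<le> lam0"
    have lamC: "2 * \<bar>lam\<bar> * C \<le> 1 - \<theta>"
    proof -
      have "\<bar>lam\<bar> * (2 * C) \<le> lam0 * (2 * C)" using hl C by (intro mult_right_mono) auto
      also have "\<dots> = 1 - \<theta>" unfolding lam0_def using C by simp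
      finally show ?thesis by (simp add: algebra_simps)
    qed
    define L where "L = 1 + \<bar>lam\<bar> * C"
    have L: "1 \<le> L" "L \<le> 2" unfolding L_def using lamC \<theta> C by auto
    define Good where "Good n a b y \<longleftrightarrow> continuous_on {0..1} y
       \<and> (\<forall>t\<in>{0..1}. y t = a + b * t + Pf (gY f lam (1 / real (Suc n)) y) t)
       \<and> \<bar>a\<bar> + \<bar>b\<bar> \<le> 1 \<and> (\<forall>t\<in>{0..1}. \<bar>y t\<bar> \<le> L)
       \<and> (\<forall>x\<in>{0..1}. \<forall>z\<in>{0..1}. \<bar>y x - y z\<bar> \<le> L * \<bar>x - z\<bar>)
       \<and> has_RS_integral y A 0 1 a \<and> has_RS_integral y B 0 1 (y 1)" for n a b y
    have "\<forall>n. \<exists>q. Good n (fst q) (fst (snd q)) (snd (snd q))"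
    proof
      fix n
      have "1 / real (Suc n) > 0" by simp
      from approx_solution[OF fc bvA bvB C(1) C(2) lamC[unfolded \<theta>_def] this]
      obtain a b y where "continuous_on {0..1} y"
        "\<forall>t\<in>{0..1}. y t = a + b * t + Pf (gY f lam (1 / real (Suc n)) y) t"
        "\<bar>a\<bar> + \<bar>b\<bar> \<le> 1" "\<forall>t\<in>{0..1}. \<bar>y t\<bar> \<le> 1 + \<bar>lam\<bar> * C"
        "\<forall>x\<in>{0..1}. \<forall>z\<in>{0..1}. \<bar>y x - y z\<bar> \<le> (1 + \<bar>lam\<bar> * C) * \<bar>x - z\<bar>"
        "has_RS_integral y A 0 1 a" "has_RS_integral y B 0 1 (y 1)" by blast
      then have "Good n a b y" unfolding Good_def L_def by blast
      then show "\<exists>q. Good n (fst q) (fst (snd q)) (snd (snd q))" by (intro exI[of _ "(a, b, y)"]) simp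
    qed
    then obtain F where F: "\<And>n. Good n (fst (F n)) (fst (snd (F n))) (snd (snd (F n)))" by metis
    define a where "a n = fst (F n)" for n
    define b where "b n = fst (snd (F n))" for n
    define y where "y n = snd (snd (F n))" for n
    have G: "Good n (a n) (b n) (y n)" for n using F[of n] unfolding a_def b_def y_def .
    have yc: "continuous_on {0..1} (y n)" for n using G[of n] unfolding Good_def by blast
    have yeq: "\<And>t. t \<in> {0..1} \<Longrightarrow> y n t = a n + b n * t + Pf (gY f lam (1 / real (Suc n)) (y n)) t" for n
      using G[of n] unfolding Good_def by blast
    have yb: "\<And>t. t \<in> {0..1} \<Longrightarrow> \<bar>y n t\<bar> \<le> L" for n using G[of n] unfolding Good_def by blast
    have ylip: "\<And>x z. x \<in> {0..1} \<Longrightarrow> z \<in> {0..1} \<Longrightarrow> \<bar>y n x - y n z\<bar> \<le> L * \<bar>x - z\<bar>" for n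
      using G[of n] unfolding Good_def by blast
    have hA: "has_RS_integral (y n) A 0 1 (a n)" for n using G[of n] unfolding Good_def by blast
    have hB: "has_RS_integral (y n) B 0 1 (y n 1)" for n using G[of n] unfolding Good_def by blast
    obtain w r where wc: "continuous_on {0..1} w" and r: "strict_mono (r :: nat \<Rightarrow> nat)"
      and wu: "\<And>e. 0 < e \<Longrightarrow> \<exists>N. \<forall>n x. n \<ge> N \<and> x \<in> {0..1} \<longrightarrow> norm (y (r n) x - w x) < e"
    proof (rule Arzela_Ascoli[of "{0..1::real}" y L])
      show "compact {0..1::real}" by simp
      show "norm (y n x) \<le> L" if "x \<in> {0..1}" for n x using yb[OF that] by simp
      fix x :: real and e :: real assume x: "x \<in> {0..1}" and e: "0 < e"
      show "\<exists>d>0. \<forall>n z. z \<in> {0..1} \<and> norm (x - z) < d \<longrightarrow> norm (y n x - y n z) < e"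
      proof (intro exI[of _ "e / L"] conjI allI impI)
        show "e / L > 0" using e L by simp
        fix n z assume z: "z \<in> {0..1} \<and> norm (x - z) < e / L"
        have "\<bar>y n x - y n z\<bar> \<le> L * \<bar>x - z\<bar>" using ylip[OF x, of z] z by simp
        also have "\<dots> < L * (e / L)" using z L by (intro mult_strict_left_mono) auto
        also have "\<dots> = e" using L by simp
        finally show "norm (y n x - y n z) < e" by simp
      qed
    qed blast
    define Y where "Y n = y (r n)" for n
    define dn where "dn n = 1 / real (Suc (r n))" for n
    define gn where "gn n = gY f lam (dn n) (Y n)" for n
    define gw where "gw s = - lam * FF f s (w s)" for s
    have dn: "dn n > 0" for n unfolding dn_def by simp
    have Yu: "\<exists>N. \<forall>n\<ge>N. \<forall>t\<in>{0..1}. \<bar>Y n t - w t\<bar> < e" if epos: "e > 0" for e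
    proof -
      obtain N where N: "\<forall>n x. n \<ge> N \<and> x \<in> {0..1} \<longrightarrow> norm (y (r n) x - w x) < e"
        using wu[OF epos] by blast
      show ?thesis unfolding Y_def using N by (intro exI[of _ N]) auto
    qed
    have Yc: "continuous_on {0..1} (Y n)" for n unfolding Y_def by (rule yc)
    have gnc: "continuous_on {0..1} (gn n)" for n unfolding gn_def by (rule gY_cont[OF fc dn Yc])
    have gwc: "continuous_on {0..1} gw" unfolding gw_def
      using FF_comp_cont[OF fc wc continuous_on_id, of "- lam"] by simp
    have Yeq: "Y n t = a (r n) + b (r n) * t + Pf (gn n) t" if "t \<in> {0..1}" for n t
      using yeq[OF that, of "r n"] unfolding Y_def gn_def dn_def .
    have gu: "\<exists>N. \<forall>n\<ge>N. \<forall>s\<in>{0..1}. \<bar>gn n s - gw s\<bar> \<le> e" if e: "e > 0" for e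
    proof -
      define e' where "e' = e / (\<bar>lam\<bar> + 1)"
      have e': "e' > 0" unfolding e'_def using e by simp
      obtain dF where dF: "dF > 0" "\<And>s z z'. s \<in> {0..1} \<Longrightarrow> \<bar>z - z'\<bar> < dF \<Longrightarrow> \<bar>FF f s z - FF f s z'\<bar> < e'"
        using FF_unif[OF fc e'] by blast
      obtain N1 where N1: "\<forall>n\<ge>N1. \<forall>t\<in>{0..1}. \<bar>Y n t - w t\<bar> < dF / 2" using Yu[of "dF/2"] dF by auto
      obtain N2 :: nat where N2: "real N2 > 4 / dF" using reals_Archimedean2 by blast
      show ?thesis
      proof (intro exI[of _ "max N1 N2"] allI impI ballI)
        fix n s assume n: "max N1 N2 \<le> n" and s: "s \<in> {0..1::real}"
        have "n \<le> r n" by (rule seq_suble[OF r])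
        then have "real (Suc N2) \<le> real (Suc (r n))" using n by simp
        then have "dn n \<le> 1 / real (Suc N2)" unfolding dn_def by (intro divide_left_mono) auto
        also have "\<dots> < dF / 4"
        proof -
          have "4 / dF < real (Suc N2)" using N2 by simp
          then show ?thesis using dF(1) by (simp add: divide_less_eq field_simps)
        qed
        finally have dsmall: "dn n < dF / 4" .
        define s' where "s' = max 0 (s - dn n)"
        have s': "s' \<in> {0..1}" "\<bar>s' - s\<bar> \<le> dn n" unfolding s'_def using s dn[of n] by auto
        have "\<bar>Y n s' - Y n s\<bar> \<le> L * \<bar>s' - s\<bar>" unfolding Y_def by (rule ylip[OF s'(1) s])
        also have "\<dots> \<le> 2 * dn n" using L s'(2) by (intro mult_mono) auto
        finally have 1: "\<bar>Y n s' - Y n s\<bar> < dF / 2" using dsmall by simp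
        have 2: "\<bar>Y n s - w s\<bar> < dF / 2" using N1 n s by auto
        have "\<bar>Y n s' - w s\<bar> < dF" using 1 2 by linarith
        then have "\<bar>FF f s (Y n s') - FF f s (w s)\<bar> < e'" by (rule dF(2)[OF s])
        then have "\<bar>gn n s - gw s\<bar> \<le> \<bar>lam\<bar> * e'"
          unfolding gn_def gw_def gY_def s'_def[symmetric]
          by (simp add: abs_mult right_diff_distrib[symmetric] mult_left_mono)
        also have "\<dots> \<le> e"
        proof -
          have "\<bar>lam\<bar> * e' = e * (\<bar>lam\<bar> / (\<bar>lam\<bar> + 1))" unfolding e'_def by simp
          also have "\<dots> \<le> e * 1" using e by (intro mult_left_mono) auto
          finally show ?thesis by simp
        qed
        finally show "\<bar>gn n s - gw s\<bar> \<le> e" .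
      qed
    qed
    have Pconv: "(\<lambda>n. Pf (gn n) t) \<longlonglongrightarrow> Pf gw t" if t: "t \<in> {0..1}" for t
    proof (rule LIMSEQ_I)
      fix e :: real assume e: "e > 0"
      then obtain N where N: "\<forall>n\<ge>N. \<forall>s\<in>{0..1}. \<bar>gn n s - gw s\<bar> \<le> e / 2" using gu[of "e/2"] by auto
      show "\<exists>N. \<forall>n\<ge>N. norm (Pf (gn n) t - Pf gw t) < e"
      proof (intro exI[of _ N] allI impI)
        fix n assume n: "n \<ge> N"
        have "\<bar>Pf (gn n) t - Pf gw t\<bar> \<le> e / 2" unfolding P_diff[OF gnc gwc t]
          by (rule P_bound) (use t N n e gnc gwc in \<open>auto intro!: continuous_intros\<close>)
        then show "norm (Pf (gn n) t - Pf gw t) < e" using e by simp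
      qed
    qed
    have Ypt: "(\<lambda>n. Y n t) \<longlonglongrightarrow> w t" if "t \<in> {0..1}" for t
      by (rule unif_pointwise[OF Yu that]) auto
    have a0: "a (r n) = Y n 0" for n using Yeq[of 0 n] by (simp add: P_zero)
    have aconv: "(\<lambda>n. a (r n)) \<longlonglongrightarrow> w 0" unfolding a0 by (rule Ypt) simp
    have b1: "b (r n) = Y n 1 - a (r n) - Pf (gn n) 1" for n using Yeq[of 1 n] by simp
    define b0 where "b0 = w 1 - w 0 - Pf gw 1"
    have bconv: "(\<lambda>n. b (r n)) \<longlonglongrightarrow> b0" unfolding b1 b0_def
      by (intro tendsto_diff Ypt aconv Pconv) auto
    have weq: "w t = w 0 + b0 * t + Pf gw t" if t: "t \<in> {0..1}" for t
    proof -
      have "(\<lambda>n. Y n t) \<longlonglongrightarrow> w 0 + b0 * t + Pf gw t"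
        unfolding Yeq[OF t] by (intro tendsto_add tendsto_mult_right aconv bconv Pconv t)
      from LIMSEQ_unique[OF Ypt[OF t] this] show ?thesis .
    qed
    have wb: "\<bar>w t\<bar> \<le> L" if t: "t \<in> {0..1}" for t
    proof -
      have "(\<lambda>n. \<bar>Y n t\<bar>) \<longlonglongrightarrow> \<bar>w t\<bar>" by (rule tendsto_rabs[OF Ypt[OF t]])
      moreover have "\<exists>N. \<forall>n\<ge>N. \<bar>Y n t\<bar> \<le> L" unfolding Y_def using yb[OF t] by blast
      ultimately show ?thesis by (rule LIMSEQ_le_const2)
    qed
    define x where "x t = w 0 + b0 * t + Pf gw t" for t
    define x' where "x' t = b0 + Qf gw t" for t
    define x'' where "x'' t = - lam * f t (x t)" for t
    have xw: "x t = w t" if "t \<in> {0..1}" for t unfolding x_def using weq[OF that] by simp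
    have gwx: "gw t = x'' t" if t: "t \<in> {0..1}" for t
    proof -
      have "\<bar>w t\<bar> \<le> 2" using wb[OF t] L by simp
      then show ?thesis unfolding gw_def x''_def FF_def xw[OF t] by (simp add: clp_id)
    qed
    have xder: "(x has_real_derivative x' t) (at t within {0..1})" if t: "t \<in> {0..1}" for t
      unfolding x_def[abs_def] x'_def
      by (rule derivative_eq_intros P_deriv[OF gwc t] | simp)+
    have x'der: "(x' has_real_derivative x'' t) (at t within {0..1})" if t: "t \<in> {0..1}" for t
    proof -
      have "(x' has_real_derivative gw t) (at t within {0..1})"
        unfolding x'_def[abs_def] by (rule derivative_eq_intros Q_deriv[OF gwc t] | simp)+
      then show ?thesis using gwx[OF t] by simp
    qed
    have x'c: "continuous_on {0..1} x'" unfolding x'_def[abs_def] by (intro continuous_intros Q_cont gwc)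
    have x''c: "continuous_on {0..1} x''" using gwc by (rule continuous_on_cong[THEN iffD1, OF refl, rotated]) (simp add: gwx)
    have Yxu: "\<exists>N. \<forall>n\<ge>N. \<forall>t\<in>{0..1}. \<bar>Y n t - x t\<bar> < e" if "e > 0" for e
      using Yu[OF that] xw by auto
    have hxA: "has_RS_integral x A 0 1 (RSI x A)" by (rule RSI_has[OF bvA xder x'c])
    have hxB: "has_RS_integral x B 0 1 (RSI x B)" by (rule RSI_has[OF bvB xder x'c])
    have "(\<lambda>n. a (r n)) \<longlonglongrightarrow> RSI x A"
      by (rule RS_limit[OF bvA _ hxA Yxu]) (simp add: Y_def hA)
    then have RA: "RSI x A = x 0" using LIMSEQ_unique[OF _ aconv] xw[of 0] by simp
    have "(\<lambda>n. Y n 1) \<longlonglongrightarrow> RSI x B"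
      by (rule RS_limit[OF bvB _ hxB Yxu]) (simp add: Y_def hB)
    then have RB: "RSI x B = x 1" using LIMSEQ_unique[OF _ Ypt[of 1]] xw[of 1] by simp
    show "\<exists>x x' x'' :: real \<Rightarrow> real.
              (\<forall>t \<in> {0..1}. (x has_real_derivative x' t) (at t within {0..1})
                             \<and> (x' has_real_derivative x'' t) (at t within {0..1}))
            \<and> continuous_on {0..1} x''
            \<and> (\<forall>t \<in> {0..1}. x'' t = - lam * f t (x t))
            \<and> has_RS_integral x A 0 1 (x 0)
            \<and> has_RS_integral x B 0 1 (x 1)"
    proof -
      have d1: "\<forall>t\<in>{0..1}. (x has_real_derivative x' t) (at t within {0..1})
                 \<and> (x' has_real_derivative x'' t) (at t within {0..1})" using xder x'der by blast
      have d3: "\<forall>t\<in>{0..1}. x'' t = - lam * f t (x t)" unfolding x''_def by simp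
      have d4: "has_RS_integral x A 0 1 (x 0)" using hxA RA by simp
      have d5: "has_RS_integral x B 0 1 (x 1)" using hxB RB by simp
      show ?thesis using d1 x''c d3 d4 d5 by blast
    qed
  qed
qed


thm_deps theorem4p17

end
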